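(* Let $1\gg \delta \gg n^{-1}$. Every $n$-vertex tree $T$ satisfies at least one of the following: (A) $T$ contains at least $\delta n/800$ vertex-disjoint bare paths, each of length at least $\delta^{-1}$; (B) $T$ contains at least $\delta^6 n$ non-neighbouring leaves; (C) removing from $T$ every leaf whose neighbour is adjacent to at least $\delta^{-4}$ leaves gives a tree with at most $n/100$ vertices.
   Context: A bare path in a tree is a path whose internal vertices all have degree 2 in the tree. A set of leaves is non-neighbouring if no two of them share a neighbour (equivalently, the leaves together with their neighbours span a matching). $a\gg b$ means the statement holds whenever $b\le a^C/C$ for a suitable fixed absolute constant $C$; in particular $n$ is sufficiently large in terms of $\delta$ and $\delta$ is sufficiently small. *)

theory Defs
  imports Complex_Main
begin

definition graph :: "nat set \<Rightarrow> nat set set \<Rightarrow> bool" where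
  "graph V E \<longleftrightarrow> finite V \<and> (\<forall>e\<in>E. card e = 2 \<and> e \<subseteq> V)"

definition adj :: "nat set set \<Rightarrow> nat \<Rightarrow> nat \<Rightarrow> bool" where
  "adj E u v \<longleftrightarrow> {u, v} \<in> E"

definition degree :: "nat set set \<Rightarrow> nat \<Rightarrow> nat" where
  "degree E v = card {u. adj E v u}"

definition is_path :: "nat set set \<Rightarrow> nat list \<Rightarrow> bool" where
  "is_path E xs \<longleftrightarrow> xs \<noteq> [] \<and> distinct xs \<and>
     (\<forall>i. Suc i < length xs \<longrightarrow> adj E (xs ! i) (xs ! Suc i))"

definition path_length :: "nat list \<Rightarrow> nat" where
  "path_length xs = length xs - 1"

definition connected_graph :: "nat set \<Rightarrow> nat set set \<Rightarrow> bool" where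
  "connected_graph V E \<longleftrightarrow>
     (\<forall>u\<in>V. \<forall>v\<in>V. \<exists>xs. is_path E xs \<and> hd xs = u \<and> last xs = v)"

definition acyclic_graph :: "nat set set \<Rightarrow> bool" where
  "acyclic_graph E \<longleftrightarrow>
     \<not> (\<exists>xs. is_path E xs \<and> length xs \<ge> 3 \<and> adj E (last xs) (hd xs))"

definition is_tree :: "nat set \<Rightarrow> nat set set \<Rightarrow> bool" where
  "is_tree V E \<longleftrightarrow> graph V E \<and> V \<noteq> {} \<and> connected_graph V E \<and> acyclic_graph E"

definition bare_path :: "nat set set \<Rightarrow> nat list \<Rightarrow> bool" where
  "bare_path E xs \<longleftrightarrow> is_path E xs \<and>
     (\<forall>i. 0 < i \<and> i + 1 < length xs \<longrightarrow> degree E (xs ! i) = 2)"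

definition is_leaf :: "nat set \<Rightarrow> nat set set \<Rightarrow> nat \<Rightarrow> bool" where
  "is_leaf V E v \<longleftrightarrow> v \<in> V \<and> degree E v = 1"

definition non_neighbouring_leaves :: "nat set \<Rightarrow> nat set set \<Rightarrow> nat set \<Rightarrow> bool" where
  "non_neighbouring_leaves V E L \<longleftrightarrow> (\<forall>l\<in>L. is_leaf V E l) \<and>
     (\<forall>l1\<in>L. \<forall>l2\<in>L. l1 \<noteq> l2 \<longrightarrow> \<not> (\<exists>w. adj E l1 w \<and> adj E l2 w))"

definition heavy_leaves :: "nat set \<Rightarrow> nat set set \<Rightarrow> real \<Rightarrow> nat set" where
  "heavy_leaves V E k = {l. is_leaf V E l \<and>
     (\<exists>w. adj E l w \<and> real (card {u. is_leaf V E u \<and> adj E w u}) \<ge> k)}"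

end

theory Submission
  imports Defs
begin


lemma adj_sym: "adj E u v = adj E v u"
  unfolding adj_def by (simp add: insert_commute)

lemma adj_in_V: "graph V E \<Longrightarrow> adj E u v \<Longrightarrow> u \<in> V \<and> v \<in> V"
  unfolding graph_def adj_def by blast

lemma adj_neq: "graph V E \<Longrightarrow> adj E u v \<Longrightarrow> u \<noteq> v"
  unfolding graph_def adj_def by fastforce

lemma nbrs_finite: "graph V E \<Longrightarrow> finite {u. adj E v u}"
proof -
  assume g: "graph V E"
  have "{u. adj E v u} \<subseteq> V" using adj_in_V[OF g] by blast
  moreover have "finite V" using g by (simp add: graph_def)
  ultimately show ?thesis by (rule finite_subset)
qed

lemma deg2_nbrs:
  assumes "degree E v = 2" "adj E v a" "adj E v b" "a \<noteq> b" "adj E v c"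
  shows "c = a \<or> c = b"
proof -
  let ?S = "{u. adj E v u}"
  have fin: "finite ?S" using assms(1) unfolding degree_def by (metis card.infinite zero_neq_numeral)
  have "{a,b} \<subseteq> ?S" using assms by auto
  moreover have "card {a,b} = card ?S" using assms(1,4) unfolding degree_def by simp
  ultimately have "{a,b} = ?S" using fin by (metis card_subset_eq)
  thus ?thesis using assms(5) by blast
qed

lemma deg2_ex: "degree E v = 2 \<Longrightarrow> \<exists>a b. a \<noteq> b \<and> adj E v a \<and> adj E v b"
  unfolding degree_def by (auto simp: card_2_iff)

lemma is_path_rev:
  assumes "is_path E xs" shows "is_path E (rev xs)"
proof -
  have "adj E (rev xs ! i) (rev xs ! Suc i)" if "Suc i < length xs" for i
  proof -
    have "Suc (length xs - Suc (Suc i)) < length xs" using that by simp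
    hence "adj E (xs ! (length xs - Suc (Suc i))) (xs ! Suc (length xs - Suc (Suc i)))"
      using assms unfolding is_path_def by blast
    moreover have "Suc (length xs - Suc (Suc i)) = length xs - Suc i" using that by simp
    ultimately show ?thesis using that by (simp add: rev_nth adj_sym)
  qed
  thus ?thesis using assms unfolding is_path_def by simp
qed

lemma is_path_snoc:
  assumes "is_path E xs" "y \<notin> set xs" "adj E (last xs) y"
  shows "is_path E (xs @ [y])"
proof -
  have "adj E ((xs@[y]) ! i) ((xs@[y]) ! Suc i)" if "Suc i < length (xs@[y])" for i
  proof (cases "Suc i < length xs")
    case True thus ?thesis using assms(1) unfolding is_path_def by (simp add: nth_append)
  next
    case False
    hence "i = length xs - 1" "xs \<noteq> []" using that assms(1) by (auto simp: is_path_def)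
    thus ?thesis using assms(3) by (simp add: nth_append last_conv_nth)
  qed
  thus ?thesis using assms unfolding is_path_def by auto
qed

lemma is_path_drop:
  assumes "is_path E xs" "i < length xs" shows "is_path E (drop i xs)"
proof -
  have "adj E (drop i xs ! j) (drop i xs ! Suc j)" if "Suc j < length (drop i xs)" for j
  proof -
    have "Suc (i+j) < length xs" using that by simp
    hence "adj E (xs ! (i+j)) (xs ! Suc (i+j))" using assms unfolding is_path_def by blast
    thus ?thesis using assms(2) by simp
  qed
  thus ?thesis using assms unfolding is_path_def by auto
qed

lemma is_path_take:
  assumes "is_path E xs" "0 < m" shows "is_path E (take m xs)"
proof -
  have "adj E (take m xs ! j) (take m xs ! Suc j)" if "Suc j < length (take m xs)" for j
  proof -
    have "Suc j < length xs" "Suc j < m" using that by auto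
    hence "adj E (xs ! j) (xs ! Suc j)" using assms unfolding is_path_def by blast
    thus ?thesis using \<open>Suc j < m\<close> by simp
  qed
  thus ?thesis using assms unfolding is_path_def by auto
qed

lemma is_path_mono: "is_path E xs \<Longrightarrow> E \<subseteq> E' \<Longrightarrow> is_path E' xs"
  unfolding is_path_def adj_def by blast

lemma acyclic_mono: "acyclic_graph E' \<Longrightarrow> E \<subseteq> E' \<Longrightarrow> acyclic_graph E"
  unfolding acyclic_graph_def using is_path_mono unfolding adj_def by blast

definition lp :: "nat set set \<Rightarrow> nat set \<Rightarrow> nat list \<Rightarrow> bool" where
  "lp E G xs \<longleftrightarrow> is_path E xs \<and> set xs \<subseteq> G \<and>
     (\<forall>ys. is_path E ys \<and> set ys \<subseteq> G \<longrightarrow> length ys \<le> length xs)"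

lemma lp_exists:
  assumes "finite G" "G \<noteq> {}" shows "\<exists>xs. lp E G xs"
proof -
  obtain g where g: "g \<in> G" using assms by auto
  have p0: "is_path E [g] \<and> set [g] \<subseteq> G" using g by (simp add: is_path_def)
  have bnd: "\<forall>ys. is_path E ys \<and> set ys \<subseteq> G \<longrightarrow> length ys < Suc (card G)"
  proof (intro allI impI)
    fix ys assume that: "is_path E ys \<and> set ys \<subseteq> G"
    have "distinct ys" using that by (simp add: is_path_def)
    hence "length ys = card (set ys)" by (simp add: distinct_card)
    also have "\<dots> \<le> card G" using that assms(1) by (simp add: card_mono)
    finally show "length ys < Suc (card G)" by simp
  qed
  from ex_has_greatest_nat[where f=length, OF p0 bnd]
  show ?thesis unfolding lp_def by blast
qed

lemma lp_rev: "lp E G xs \<Longrightarrow> lp E G (rev xs)"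
  unfolding lp_def using is_path_rev by auto

lemma lp_last:
  assumes gr: "graph V E" and ac: "acyclic_graph E" and lp: "lp E G xs"
    and a: "adj E (last xs) y" and y: "y \<in> G"
  shows "2 \<le> length xs \<and> y = xs ! (length xs - 2)"
proof -
  have p: "is_path E xs" and sG: "set xs \<subseteq> G"
    and mx: "\<And>ys. is_path E ys \<Longrightarrow> set ys \<subseteq> G \<Longrightarrow> length ys \<le> length xs"
    using lp unfolding lp_def by auto
  have ne: "xs \<noteq> []" using p by (simp add: is_path_def)
  show ?thesis
  proof (cases "y \<in> set xs")
    case False
    have "is_path E (xs @ [y])" using is_path_snoc[OF p False a] .
    moreover have "set (xs @ [y]) \<subseteq> G" using sG y by auto
    ultimately have "length (xs @ [y]) \<le> length xs" using mx by blast
    thus ?thesis by simp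
  next
    case True
    then obtain i where i: "i < length xs" "xs ! i = y" by (auto simp: in_set_conv_nth)
    have lastn: "last xs = xs ! (length xs - 1)" using ne by (simp add: last_conv_nth)
    have "i \<noteq> length xs - 1" using adj_neq[OF gr a] i lastn by auto
    moreover have "\<not> i < length xs - 2"
    proof
      assume il: "i < length xs - 2"
      let ?zs = "drop i xs"
      have "is_path E ?zs" using is_path_drop[OF p i(1)] .
      moreover have "length ?zs \<ge> 3" using il by simp
      moreover have "adj E (last ?zs) (hd ?zs)"
        using a i il ne by (simp add: hd_drop_conv_nth)
      ultimately show False using ac unfolding acyclic_graph_def by blast
    qed
    ultimately have "i = length xs - 2" "2 \<le> length xs" using i by auto
    thus ?thesis using i by simp
  qed
qed

lemma lp_hd:
  assumes gr: "graph V E" and ac: "acyclic_graph E" and lp: "lp E G xs"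
    and a: "adj E (hd xs) y" and y: "y \<in> G"
  shows "2 \<le> length xs \<and> y = xs ! 1"
proof -
  have ne: "xs \<noteq> []" using lp by (simp add: lp_def is_path_def)
  have "last (rev xs) = hd xs" using ne by (simp add: last_rev)
  hence h: "2 \<le> length (rev xs) \<and> y = rev xs ! (length (rev xs) - 2)"
    using lp_last[OF gr ac lp_rev[OF lp], of y] a y by simp
  hence "2 \<le> length xs" by simp
  moreover have "rev xs ! (length xs - 2) = xs ! 1"
    using \<open>2 \<le> length xs\<close> by (simp add: rev_nth Suc_diff_Suc numeral_2_eq_2)
  ultimately show ?thesis using h by simp
qed

lemma lp_nbr:
  assumes gr: "graph V E" and ac: "acyclic_graph E" and lp: "lp E G xs"
    and dg: "\<forall>g\<in>G. degree E g = 2"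
    and i: "i < length xs" and g: "g \<in> G" and a: "adj E (xs ! i) g"
  shows "(0 < i \<and> g = xs ! (i - 1)) \<or> (i + 1 < length xs \<and> g = xs ! (i + 1))"
proof -
  have p: "is_path E xs" and sG: "set xs \<subseteq> G" using lp unfolding lp_def by auto
  have ne: "xs \<noteq> []" using p by (simp add: is_path_def)
  have dist: "distinct xs" using p by (simp add: is_path_def)
  consider "i = length xs - 1" | "i = 0" "i \<noteq> length xs - 1" | "0 < i" "i < length xs - 1"
    using i by linarith
  thus ?thesis
  proof cases
    case 1
    have "last xs = xs ! i" using 1 ne by (simp add: last_conv_nth)
    with lp_last[OF gr ac lp _ g] a have h: "2 \<le> length xs \<and> g = xs ! (length xs - 2)" by simp
    moreover have "i - 1 = length xs - 2" using 1 by simp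
    ultimately show ?thesis using 1 by auto
  next
    case 2
    have "hd xs = xs ! i" using 2 ne by (simp add: hd_conv_nth)
    with lp_hd[OF gr ac lp _ g] a have h: "2 \<le> length xs \<and> g = xs ! 1" by simp
    thus ?thesis using 2 by auto
  next
    case 3
    have d: "degree E (xs ! i) = 2" using dg sG i nth_mem by blast
    have "Suc (i - 1) < length xs" using 3 by arith
    hence a1: "adj E (xs ! (i - 1)) (xs ! Suc (i - 1))" using p unfolding is_path_def by blast
    hence a1': "adj E (xs ! i) (xs ! (i - 1))" using 3 by (simp add: adj_sym)
    have a2: "adj E (xs ! i) (xs ! Suc i)" using p 3 unfolding is_path_def by auto
    have "xs ! (i - 1) \<noteq> xs ! Suc i" using dist 3 by (simp add: nth_eq_iff_index_eq)
    from deg2_nbrs[OF d a1' a2 this a] show ?thesis using 3 by auto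
  qed
qed

lemma lp_out:
  assumes gr: "graph V E" and ac: "acyclic_graph E" and lp: "lp E G xs"
    and dg: "\<forall>g\<in>G. degree E g = 2"
  shows "\<exists>y0 y1. y0 \<notin> G \<and> y1 \<notin> G \<and> adj E (hd xs) y0 \<and> adj E (last xs) y1
     \<and> (hd xs, y0) \<noteq> (last xs, y1)"
proof -
  have p: "is_path E xs" and sG: "set xs \<subseteq> G" using lp unfolding lp_def by auto
  have ne: "xs \<noteq> []" using p by (simp add: is_path_def)
  have dist: "distinct xs" using p by (simp add: is_path_def)
  have hG: "hd xs \<in> G" and lG: "last xs \<in> G" using ne sG by auto
  show ?thesis
  proof (cases "length xs = 1")
    case True
    then have hl: "hd xs = last xs" using ne by (cases xs) auto
    obtain a b where ab: "a \<noteq> b" "adj E (last xs) a" "adj E (last xs) b"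
      using deg2_ex dg lG by blast
    have "a \<notin> G" using lp_last[OF gr ac lp ab(2)] True by auto
    moreover have "b \<notin> G" using lp_last[OF gr ac lp ab(3)] True by auto
    ultimately show ?thesis using ab hl by auto
  next
    case False
    have "length xs \<noteq> 0" using ne by simp
    hence len: "2 \<le> length xs" using False by linarith
    obtain a b where ab: "a \<noteq> b" "adj E (last xs) a" "adj E (last xs) b"
      using deg2_ex dg lG by blast
    obtain y1 where y1: "adj E (last xs) y1" "y1 \<noteq> xs ! (length xs - 2)" using ab by metis
    have y1G: "y1 \<notin> G" using lp_last[OF gr ac lp y1(1)] y1(2) by auto
    obtain c d where cd: "c \<noteq> d" "adj E (hd xs) c" "adj E (hd xs) d"
      using deg2_ex dg hG by blast
    obtain y0 where y0: "adj E (hd xs) y0" "y0 \<noteq> xs ! 1" using cd by metis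
    have y0G: "y0 \<notin> G" using lp_hd[OF gr ac lp y0(1)] y0(2) by auto
    have "hd xs \<noteq> last xs" using dist len ne
      by (simp add: hd_conv_nth last_conv_nth nth_eq_iff_index_eq)
    thus ?thesis using y0 y1 y0G y1G by auto
  qed
qed




definition Bd :: "nat set set \<Rightarrow> nat set \<Rightarrow> (nat \<times> nat) set" where
  "Bd E G = {(g,u). g \<in> G \<and> u \<notin> G \<and> adj E g u}"

lemma Bd_finite: "graph V E \<Longrightarrow> finite (Bd E G)"
proof -
  assume g: "graph V E"
  have "Bd E G \<subseteq> V \<times> V" using adj_in_V[OF g] unfolding Bd_def by blast
  moreover have "finite V" using g by (simp add: graph_def)
  ultimately show ?thesis using finite_subset by blast
qed

lemma paths_lemma:
  assumes gr: "graph V E" and ac: "acyclic_graph E" and M: "1 \<le> M"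
  shows "G \<subseteq> V \<Longrightarrow> (\<forall>g\<in>G. degree E g = 2) \<Longrightarrow> \<exists>P::nat list list.
     (\<forall>p\<in>set P. is_path E p \<and> length p = M \<and> set p \<subseteq> G) \<and>
     (\<forall>i j. i < length P \<and> j < length P \<and> i \<noteq> j \<longrightarrow> set (P ! i) \<inter> set (P ! j) = {}) \<and>
     card G \<le> length P * M + M * card (Bd E G)"
proof (induction "card G" arbitrary: G rule: less_induct)
  case less
  have finV: "finite V" using gr by (simp add: graph_def)
  have finG: "finite G" using less.prems(1) finV finite_subset by blast
  have dg: "\<forall>g\<in>G. degree E g = 2" using less.prems(2) .
  show ?case
  proof (cases "G = {}")
    case True
    show ?thesis by (rule exI[of _ "[]"]) (simp add: True)
  next
    case False
    obtain xs where lp: "lp E G xs" using lp_exists[OF finG False] by blast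
    have p: "is_path E xs" and sG: "set xs \<subseteq> G" using lp unfolding lp_def by auto
    have ne: "xs \<noteq> []" using p by (simp add: is_path_def)
    have dist: "distinct xs" using p by (simp add: is_path_def)
    have finB: "finite (Bd E G)" using Bd_finite[OF gr] .
    obtain y0 y1 where y: "y0 \<notin> G" "y1 \<notin> G" "adj E (hd xs) y0" "adj E (last xs) y1"
      "(hd xs, y0) \<noteq> (last xs, y1)"
      using lp_out[OF gr ac lp dg] by blast
    have hdB: "(hd xs, y0) \<in> Bd E G" using y ne sG unfolding Bd_def by auto
    have lastB: "(last xs, y1) \<in> Bd E G" using y ne sG unfolding Bd_def by auto
    show ?thesis
    proof (cases "M \<le> length xs")
      case True
      define S where "S = set (take M xs)"
      define G' where "G' = G - S"
      have SG: "S \<subseteq> G" using sG by (auto simp: S_def dest: in_set_takeD)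
      have cardS: "card S = M" using True dist by (simp add: S_def distinct_card)
      have inS: "xs ! j \<in> S" if "j < M" for j
      proof -
        have "take M xs ! j = xs ! j" using that by simp
        moreover have "j < length (take M xs)" using that True by simp
        ultimately show ?thesis unfolding S_def by (metis nth_mem)
      qed
      have Sin: "\<exists>i<M. u = xs ! i" if uS: "u \<in> S" for u
      proof -
        obtain i where "i < length (take M xs)" "take M xs ! i = u"
          using uS unfolding S_def in_set_conv_nth by blast
        thus ?thesis by auto
      qed
      have hdS: "hd xs \<in> S" using inS[of 0] M ne by (simp add: hd_conv_nth)
      have finS: "finite S" unfolding S_def by simp
      have cG': "card G' = card G - M" unfolding G'_def using card_Diff_subset[OF finS SG] cardS by simp
      have "card G' < card G" using cG' M cardS card_mono[OF finG SG] by linarith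
      moreover have "G' \<subseteq> V" using less.prems(1) unfolding G'_def by blast
      moreover have "\<forall>g\<in>G'. degree E g = 2" using dg unfolding G'_def by blast
      ultimately obtain P' where P':
        "\<forall>p\<in>set P'. is_path E p \<and> length p = M \<and> set p \<subseteq> G'"
        "\<forall>i j. i < length P' \<and> j < length P' \<and> i \<noteq> j \<longrightarrow> set (P' ! i) \<inter> set (P' ! j) = {}"
        "card G' \<le> length P' * M + M * card (Bd E G')"
        using less.hyps[of G'] by blast
      have BdSub: "Bd E G' \<subseteq> insert (xs ! M, xs ! (M - 1)) (Bd E G - {(hd xs, y0)})"
      proof
        fix z assume z: "z \<in> Bd E G'"
        then obtain g u where z': "z = (g,u)" "g \<in> G" "g \<notin> S" "u \<notin> G'" "adj E g u"
          unfolding Bd_def G'_def by auto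
        show "z \<in> insert (xs ! M, xs ! (M - 1)) (Bd E G - {(hd xs, y0)})"
        proof (cases "u \<in> G")
          case False
          hence "z \<in> Bd E G" using z' unfolding Bd_def by auto
          moreover have "z \<noteq> (hd xs, y0)" using z' hdS by auto
          ultimately show ?thesis by auto
        next
          case True
          hence "u \<in> S" using z' unfolding G'_def by auto
          then obtain i where i: "i < M" "u = xs ! i" using Sin by blast
          have il: "i < length xs" using i True \<open>M \<le> length xs\<close> by linarith
          have "adj E (xs ! i) g" using z' i by (simp add: adj_sym)
          from lp_nbr[OF gr ac lp dg il z'(2) this]
          have "(0 < i \<and> g = xs ! (i - 1)) \<or> (i + 1 < length xs \<and> g = xs ! (i + 1))" .
          moreover have "\<not> (0 < i \<and> g = xs ! (i - 1))"
          proof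
            assume h: "0 < i \<and> g = xs ! (i - 1)"
            have "i - 1 < M" using i by arith
            thus False using inS[of "i - 1"] h z'(3) by simp
          qed
          ultimately have g: "i + 1 < length xs" "g = xs ! (i + 1)" by auto
          have "\<not> i + 1 < M" using inS[of "i + 1"] g z' by auto
          hence "i = M - 1" using i by linarith
          thus ?thesis using g i z' by auto
        qed
      qed
      have "card (Bd E G') \<le> card (insert (xs ! M, xs ! (M - 1)) (Bd E G - {(hd xs, y0)}))"
        using BdSub finB by (simp add: card_mono)
      also have "\<dots> \<le> card (Bd E G - {(hd xs, y0)}) + 1" by (simp add: card_insert_le_m1)
      also have "\<dots> = card (Bd E G)" using hdB finB
        by (simp add: card_Diff_singleton) (metis Suc_pred card_gt_0_iff empty_iff)
      finally have cB: "card (Bd E G') \<le> card (Bd E G)" .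
      define P where "P = take M xs # P'"
      have "is_path E (take M xs)" using is_path_take[OF p] M by simp
      moreover have "length (take M xs) = M" using True by simp
      moreover have "set (take M xs) \<subseteq> G" using SG unfolding S_def .
      moreover have "\<forall>p\<in>set P'. is_path E p \<and> length p = M \<and> set p \<subseteq> G"
        using P'(1) unfolding G'_def by blast
      ultimately have "\<forall>p\<in>set P. is_path E p \<and> length p = M \<and> set p \<subseteq> G"
        unfolding P_def by simp
      moreover have "\<forall>i j. i < length P \<and> j < length P \<and> i \<noteq> j \<longrightarrow> set (P ! i) \<inter> set (P ! j) = {}"
      proof (intro allI impI)
        fix i j assume ij: "i < length P \<and> j < length P \<and> i \<noteq> j"
        have dj: "set (P' ! k) \<inter> S = {}" if "k < length P'" for k
          using P'(1) that nth_mem unfolding G'_def by blast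
        show "set (P ! i) \<inter> set (P ! j) = {}"
        proof (cases i)
          case 0
          then obtain j' where "j = Suc j'" using ij by (cases j) auto
          thus ?thesis using 0 ij dj[of j'] unfolding P_def S_def by auto
        next
          case (Suc i')
          show ?thesis
          proof (cases j)
            case 0
            thus ?thesis using Suc ij dj[of i'] unfolding P_def S_def by auto
          next
            case (Suc j')
            thus ?thesis using \<open>i = Suc i'\<close> ij P'(2) unfolding P_def by auto
          qed
        qed
      qed
      moreover have "card G \<le> length P * M + M * card (Bd E G)"
      proof -
        have "M * card (Bd E G') \<le> M * card (Bd E G)" by (rule mult_le_mono2[OF cB])
        moreover have "card G = card G' + M" using cG' cardS card_mono[OF finG SG] by linarith
        moreover have "length P * M = length P' * M + M" unfolding P_def by simp
        ultimately show ?thesis using P'(3) by linarith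
      qed
      ultimately show ?thesis by blast
    next
      case False
      define S where "S = set xs"
      define G' where "G' = G - S"
      have SG: "S \<subseteq> G" using sG by (simp add: S_def)
      have cardS: "card S = length xs" using dist by (simp add: S_def distinct_card)
      have finS: "finite S" unfolding S_def by simp
      have cG': "card G' = card G - card S" unfolding G'_def using card_Diff_subset[OF finS SG] by simp
      have "card S > 0" using cardS ne by simp
      hence "card G' < card G" using cG' card_mono[OF finG SG] by linarith
      moreover have "G' \<subseteq> V" using less.prems(1) unfolding G'_def by blast
      moreover have "\<forall>g\<in>G'. degree E g = 2" using dg unfolding G'_def by blast
      ultimately obtain P' where P':
        "\<forall>p\<in>set P'. is_path E p \<and> length p = M \<and> set p \<subseteq> G'"
        "\<forall>i j. i < length P' \<and> j < length P' \<and> i \<noteq> j \<longrightarrow> set (P' ! i) \<inter> set (P' ! j) = {}"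
        "card G' \<le> length P' * M + M * card (Bd E G')"
        using less.hyps[of G'] by blast
      have hdS: "hd xs \<in> S" and lastS: "last xs \<in> S" using ne by (auto simp: S_def)
      have BdSub: "Bd E G' \<subseteq> Bd E G - {(hd xs, y0), (last xs, y1)}"
      proof
        fix z assume z: "z \<in> Bd E G'"
        then obtain g u where z': "z = (g,u)" "g \<in> G" "g \<notin> S" "u \<notin> G'" "adj E g u"
          unfolding Bd_def G'_def by auto
        show "z \<in> Bd E G - {(hd xs, y0), (last xs, y1)}"
        proof (cases "u \<in> G")
          case False
          hence "z \<in> Bd E G" using z' unfolding Bd_def by auto
          moreover have "z \<noteq> (hd xs, y0)" "z \<noteq> (last xs, y1)" using z' hdS lastS by auto
          ultimately show ?thesis by auto
        next
          case True
          hence "u \<in> S" using z' unfolding G'_def by auto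
          then obtain i where i: "i < length xs" "u = xs ! i" unfolding S_def by (auto simp: in_set_conv_nth)
          have "adj E (xs ! i) g" using z' i by (simp add: adj_sym)
          from lp_nbr[OF gr ac lp dg i(1) z'(2) this]
          have d: "(0 < i \<and> g = xs ! (i - 1)) \<or> (i + 1 < length xs \<and> g = xs ! (i + 1))" .
          have "g \<in> S"
          proof (cases "0 < i \<and> g = xs ! (i - 1)")
            case True
            have "i - 1 < length xs" using i(1) by arith
            thus ?thesis using True unfolding S_def by simp
          next
            case False
            with d have "i + 1 < length xs" "g = xs ! (i + 1)" by auto
            thus ?thesis unfolding S_def by simp
          qed
          thus ?thesis using z' by auto
        qed
      qed
      have sub2: "{(hd xs, y0), (last xs, y1)} \<subseteq> Bd E G" using hdB lastB by auto
      have "card (Bd E G') \<le> card (Bd E G - {(hd xs, y0), (last xs, y1)})"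
        using BdSub finB by (simp add: card_mono)
      also have "\<dots> = card (Bd E G) - 2" using card_Diff_subset[OF _ sub2] y(5) by simp
      finally have cB: "card (Bd E G') + 2 \<le> card (Bd E G)"
        using card_mono[OF finB sub2] y(5) by simp
      have "card (Bd E G') + 1 \<le> card (Bd E G)" using cB by simp
      hence "M * (card (Bd E G') + 1) \<le> M * card (Bd E G)" by (rule mult_le_mono2)
      hence "M * card (Bd E G') + M \<le> M * card (Bd E G)" by (simp add: algebra_simps)
      moreover have "card G = card G' + card S" using cG' card_mono[OF finG SG] by linarith
      moreover have "card S \<le> M" using False cardS by simp
      ultimately have "card G \<le> length P' * M + M * card (Bd E G)" using P'(3) by linarith
      moreover have "\<forall>p\<in>set P'. is_path E p \<and> length p = M \<and> set p \<subseteq> G"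
        using P'(1) unfolding G'_def by auto
      ultimately show ?thesis using P'(2) by blast
    qed
  qed
qed




lemma acyclic_low_deg:
  assumes gr: "graph V E" and ac: "acyclic_graph E" and ne: "V \<noteq> {}"
  shows "\<exists>v\<in>V. degree E v \<le> 1"
proof -
  have finV: "finite V" using gr by (simp add: graph_def)
  obtain xs where lp: "lp E V xs" using lp_exists[OF finV ne] by blast
  have p: "is_path E xs" and sV: "set xs \<subseteq> V" using lp unfolding lp_def by auto
  have nxs: "xs \<noteq> []" using p by (simp add: is_path_def)
  have "{u. adj E (last xs) u} \<subseteq> {xs ! (length xs - 2)}"
    using lp_last[OF gr ac lp] adj_in_V[OF gr] by blast
  hence "card {u. adj E (last xs) u} \<le> card {xs ! (length xs - 2)}"
    by (rule card_mono[rotated]) simp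
  hence "degree E (last xs) \<le> 1" unfolding degree_def by simp
  moreover have "last xs \<in> V" using nxs sV by auto
  ultimately show ?thesis by blast
qed

lemma graph_finE: "graph V E \<Longrightarrow> finite E"
proof -
  assume g: "graph V E"
  have "E \<subseteq> Pow V" using g unfolding graph_def by blast
  moreover have "finite V" using g by (simp add: graph_def)
  ultimately show ?thesis by (simp add: finite_subset)
qed

lemma edge_two: "graph V E \<Longrightarrow> e \<in> E \<Longrightarrow> \<exists>x y. e = {x,y} \<and> x \<noteq> y"
  unfolding graph_def by (simp add: card_2_iff)

lemma edge_count:
  "graph V E \<Longrightarrow> acyclic_graph E \<Longrightarrow> V \<noteq> {} \<Longrightarrow> card E + 1 \<le> card V"
proof (induction "card V" arbitrary: V E rule: less_induct)
  case less
  have finV: "finite V" using less.prems(1) by (simp add: graph_def)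
  have finE: "finite E" using graph_finE[OF less.prems(1)] .
  obtain v where v: "v \<in> V" "degree E v \<le> 1" using acyclic_low_deg[OF less.prems] by blast
  define V0 where "V0 = V - {v}"
  define E0 where "E0 = {e\<in>E. v \<notin> e}"
  have gr0: "graph V0 E0" using less.prems(1) unfolding graph_def V0_def E0_def by auto
  have ac0: "acyclic_graph E0" using acyclic_mono[OF less.prems(2)] unfolding E0_def by auto
  have sub: "E - E0 \<subseteq> (\<lambda>u. {v,u}) ` {u. adj E v u}"
  proof
    fix e assume e: "e \<in> E - E0"
    then obtain x y where xy: "e = {x,y}" "x \<noteq> y" using edge_two[OF less.prems(1)] by blast
    have ve: "v \<in> e" "e \<in> E" using e unfolding E0_def by auto
    obtain u where "e = {v,u}" using ve(1) xy(1) by blast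
    then show "e \<in> (\<lambda>u. {v,u}) ` {u. adj E v u}"
      using ve(2) unfolding adj_def by blast
  qed
  have fn: "finite {u. adj E v u}" using nbrs_finite[OF less.prems(1)] .
  have "card (E - E0) \<le> card ((\<lambda>u. {v,u}) ` {u. adj E v u})"
    using card_mono[OF finite_imageI[OF fn] sub] .
  also have "\<dots> \<le> card {u. adj E v u}" using card_image_le[OF fn] .
  finally have "card (E - E0) \<le> card {u. adj E v u}" .
  hence c1: "card (E - E0) \<le> 1" using v unfolding degree_def by simp
  have E0E: "E0 \<subseteq> E" unfolding E0_def by auto
  have cE: "card E = card E0 + card (E - E0)"
    using card_Diff_subset[OF finite_subset[OF E0E finE] E0E] card_mono[OF finE E0E] by simp
  show ?case
  proof (cases "V0 = {}")
    case True
    have VV: "V = {v}" using True v unfolding V0_def by blast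
    have "E = {}"
    proof (rule ccontr)
      assume "E \<noteq> {}"
      then obtain e where e: "e \<in> E" by blast
      then obtain x y where "e = {x,y}" "x \<noteq> y" using edge_two[OF less.prems(1)] by blast
      moreover have "e \<subseteq> V" using less.prems(1) e unfolding graph_def by blast
      ultimately show False using VV by blast
    qed
    moreover have "V = {v}" using True v unfolding V0_def by blast
    hence "card V = 1" by simp
    ultimately show ?thesis by simp
  next
    case False
    have cV0: "card V0 = card V - 1" unfolding V0_def using v finV by simp
    have "card V > 0" using v finV card_gt_0_iff by blast
    hence "card V0 < card V" using cV0 by linarith
    from less.hyps[OF this gr0 ac0 False] have "card E0 + 1 \<le> card V0" .
    thus ?thesis using cE c1 cV0 by linarith
  qed
qed

lemma edge_le: "graph V E \<Longrightarrow> acyclic_graph E \<Longrightarrow> card E \<le> card V"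
proof (cases "V = {}")
  case True
  assume g: "graph V E"
  have "E = {}"
  proof (rule ccontr)
    assume "E \<noteq> {}"
    then obtain e where "e \<in> E" by blast
    then obtain x y where "e = {x,y}" using edge_two[OF g] by blast
    moreover have "e \<subseteq> V" using g \<open>e \<in> E\<close> unfolding graph_def by blast
    ultimately show False using True by blast
  qed
  thus ?thesis by simp
next
  case False
  assume "graph V E" "acyclic_graph E"
  from edge_count[OF this False] show ?thesis by simp
qed

lemma handshake:
  assumes gr: "graph V E"
  shows "(\<Sum>v\<in>V. degree E v) = 2 * card E"
proof -
  have finV: "finite V" using gr by (simp add: graph_def)
  have finE: "finite E" using graph_finE[OF gr] .
  have "(\<Sum>v\<in>V. degree E v) = card (SIGMA v:V. {u. adj E v u})"
    unfolding degree_def using finV nbrs_finite[OF gr] by simp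
  also have "(SIGMA v:V. {u. adj E v u}) = (\<Union>e\<in>E. {(a,b). {a,b} = e})"
  proof (rule set_eqI)
    fix z :: "nat \<times> nat"
    obtain a b where z: "z = (a,b)" by (cases z)
    have "a \<in> V" if "{a,b} \<in> E" using adj_in_V[OF gr, of a b] that unfolding adj_def by blast
    thus "z \<in> (SIGMA v:V. {u. adj E v u}) \<longleftrightarrow> z \<in> (\<Union>e\<in>E. {(a,b). {a,b} = e})"
      unfolding z adj_def by blast
  qed
  also have "card \<dots> = (\<Sum>e\<in>E. card {(a,b). {a,b} = e})"
  proof (rule card_UN_disjoint[OF finE])
    show "\<forall>e\<in>E. finite {(a, b). {a, b} = e}"
    proof
      fix e assume "e \<in> E"
      have "{(a, b). {a, b} = e} \<subseteq> e \<times> e" by auto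
      moreover have "finite e" using \<open>e \<in> E\<close> edge_two[OF gr] by blast
      ultimately show "finite {(a, b). {a, b} = e}" using finite_subset by blast
    qed
    show "\<forall>i\<in>E. \<forall>j\<in>E. i \<noteq> j \<longrightarrow> {(a, b). {a, b} = i} \<inter> {(a, b). {a, b} = j} = {}" by auto
  qed
  also have "\<dots> = (\<Sum>e\<in>E. 2)"
  proof (rule sum.cong[OF refl])
    fix e assume "e \<in> E"
    then obtain x y where xy: "e = {x,y}" "x \<noteq> y" using edge_two[OF gr] by blast
    have "{(a,b). {a,b} = e} = {(x,y),(y,x)}" using xy by (auto simp: doubleton_eq_iff)
    thus "card {(a,b). {a,b} = e} = 2" using xy by simp
  qed
  finally show ?thesis by simp
qed




lemma leaf_unique:
  assumes "is_leaf V E l" "adj E l a" "adj E l b" shows "a = b"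
proof -
  have "card {u. adj E l u} = 1" using assms(1) unfolding is_leaf_def degree_def by simp
  then obtain x where "{u. adj E l u} = {x}" by (rule card_1_singletonE)
  thus ?thesis using assms(2,3) by (metis mem_Collect_eq singletonD)
qed

lemma leaf_nbr:
  assumes "is_leaf V E l" shows "\<exists>w. adj E l w"
proof -
  have "card {u. adj E l u} = 1" using assms(1) unfolding is_leaf_def degree_def by simp
  then obtain x where "{u. adj E l u} = {x}" by (rule card_1_singletonE)
  thus ?thesis by blast
qed

lemma deg_pos:
  assumes T: "is_tree V E" and n2: "2 \<le> card V" and v: "v \<in> V"
  shows "degree E v \<noteq> 0"
proof -
  have gr: "graph V E" using T by (simp add: is_tree_def)
  have "V \<noteq> {v}" using n2 by auto
  then obtain u where u: "u \<in> V" "u \<noteq> v" using v by blast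
  obtain xs where xs: "is_path E xs" "hd xs = v" "last xs = u"
    using T v u unfolding is_tree_def connected_graph_def by blast
  have ne: "xs \<noteq> []" using xs by (simp add: is_path_def)
  have "length xs \<noteq> 1"
  proof
    assume "length xs = 1"
    then obtain a where "xs = [a]" by (cases xs) auto
    thus False using xs u by simp
  qed
  hence "Suc 0 < length xs" using ne by (cases xs) auto
  hence "adj E (xs ! 0) (xs ! Suc 0)" using xs(1) unfolding is_path_def by blast
  hence "adj E v (xs ! 1)" using xs(2) ne by (simp add: hd_conv_nth)
  hence "{u. adj E v u} \<noteq> {}" by blast
  thus ?thesis unfolding degree_def using nbrs_finite[OF gr] by simp
qed




lemma final_arith:
  fixes d n p lh g v3 b c M h :: real
  assumes d0: "0 < d" and d1: "d \<le> 1/100" and pb: "p < d^6 * n" and lh: "lh \<le> p * (1/d^4)"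
    and v3: "v3 \<le> 3*p" and b: "b \<le> 10*p" and h: "h \<le> lh + g + v3" and hn: "h > n/100"
    and g: "g \<le> c*M + M*b" and M: "M \<le> 1/d + 2" and M0: "0 \<le> M" and p0: "0 \<le> p" and n0: "0 < n"
    and c0: "0 \<le> c" and b0: "0 \<le> b"
  shows "c \<ge> d * n / 800"
proof (rule ccontr)
  assume "\<not> c \<ge> d * n / 800"
  hence cl: "c < d * n / 800" by simp
  have d4: "0 < d^4" using d0 by simp
  have "p * (1/d^4) \<le> d^6 * n * (1/d^4)" using pb d4 by (simp add: divide_right_mono less_imp_le)
  also have "\<dots> = d^2 * n" using d0 by (simp add: field_simps power_def eval_nat_numeral)
  finally have lh2: "lh \<le> d^2 * n" using lh by linarith
  have d2: "d^2 \<le> 1/10000"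
  proof -
    have "d^2 \<le> (1/100)^2" using d0 d1 by (intro power_mono) auto
    also have "(1/100::real)^2 = 1/10000" by (simp add: power2_eq_square)
    finally show ?thesis .
  qed
  have d5: "d^5 \<le> d^2" using d0 d1 by (intro power_decreasing) auto
  have d6: "d^6 \<le> d^2" using d0 d1 by (intro power_decreasing) auto
  have n5: "d^5 * n \<le> d^2 * n" using d5 n0 by (simp add: mult_right_mono)
  have n6: "d^6 * n \<le> d^2 * n" using d6 n0 by (simp add: mult_right_mono)
  have n2: "d^2 * n \<le> n / 10000" using d2 n0 by (simp add: mult_right_mono)
  have M3: "M \<le> 3 / d" using M d0 d1 by (simp add: field_simps)
  have cb: "c + b \<le> d * n / 800 + 10 * (d^6 * n)" using cl b pb by linarith
  have "g \<le> M * (c + b)" using g by (simp add: algebra_simps)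
  also have "\<dots> \<le> (3/d) * (c + b)" using M3 c0 b0 by (intro mult_right_mono) auto
  also have "\<dots> \<le> (3/d) * (d * n / 800 + 10 * (d^6 * n))" using cb d0 by (intro mult_left_mono) auto
  also have "\<dots> = 3 * n / 800 + 30 * (d^5 * n)" using d0 by (simp add: field_simps power_def eval_nat_numeral)
  finally have gu: "g \<le> 3 * n / 800 + 30 * (d^5 * n)" .
  have "n/100 < d^2 * n + g + 3 * (d^6 * n)" using hn h lh2 v3 pb by linarith
  thus False using gu n5 n6 n2 n0 by linarith
qed




lemma core:
  fixes d :: real
  assumes T: "is_tree V E" and nV: "card V = n" and n2: "2 \<le> n" and d0: "0 < d" and d1: "d \<le> 1/100"
    and notB: "\<not> (\<exists>L. non_neighbouring_leaves V E L \<and> real (card L) \<ge> d ^ 6 * real n)"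
    and notC: "\<not> (real (card (V - heavy_leaves V E (1 / d ^ 4))) \<le> real n / 100)"
  shows "\<exists>P::nat list list. real (length P) \<ge> d * real n / 800 \<and>
             (\<forall>p\<in>set P. bare_path E p \<and> real (path_length p) \<ge> 1 / d) \<and>
             (\<forall>i j. i < length P \<and> j < length P \<and> i \<noteq> j \<longrightarrow> set (P ! i) \<inter> set (P ! j) = {})"
proof -
  have gr: "graph V E" and ac: "acyclic_graph E" using T by (auto simp: is_tree_def)
  have finV: "finite V" using gr by (simp add: graph_def)
  define k where "k = 1 / d ^ 4"
  define Lf where "Lf = {v. is_leaf V E v}"
  define Par where "Par = {w. \<exists>l. is_leaf V E l \<and> adj E w l}"
  define NL where "NL w = {u. is_leaf V E u \<and> adj E w u}" for w
  define H where "H = heavy_leaves V E k"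
  define G where "G = {v\<in>V. degree E v = 2}"
  define V3 where "V3 = {v\<in>V. 3 \<le> degree E v}"
  define V' where "V' = V - Lf"
  define m where "m v = card {u. adj E v u \<and> u \<in> V'}" for v
  define A where "A = {v\<in>V'. m v \<le> 1}"
  define Bg where "Bg = {v\<in>V'. 3 \<le> m v}"
  define p where "p = card Par"
  have LfV: "Lf \<subseteq> V" by (auto simp: Lf_def is_leaf_def)
  have ParV: "Par \<subseteq> V" using adj_in_V[OF gr] unfolding Par_def by blast
  have finPar: "finite Par" using finite_subset[OF ParV finV] .
  have dpos: "degree E v \<noteq> 0" if "v \<in> V" for v using deg_pos[OF T _ that] nV n2 by auto
  have finV': "finite V'" using finV unfolding V'_def by simp
  have finm: "finite {u. adj E v u \<and> u \<in> V'}" for v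
    using finite_subset[OF _ nbrs_finite[OF gr, of v]] by auto

  define f where "f w = (SOME l. is_leaf V E l \<and> adj E w l)" for w
  have f: "is_leaf V E (f w) \<and> adj E w (f w)" if "w \<in> Par" for w
  proof -
    have "\<exists>l. is_leaf V E l \<and> adj E w l" using that unfolding Par_def by blast
    thus ?thesis unfolding f_def by (rule someI_ex)
  qed
  have finj: "inj_on f Par"
  proof (rule inj_onI)
    fix w1 w2 assume w: "w1 \<in> Par" "w2 \<in> Par" "f w1 = f w2"
    have "adj E (f w1) w1" using f[OF w(1)] adj_sym by metis
    moreover have "adj E (f w1) w2" using f[OF w(2)] w(3) adj_sym by metis
    ultimately show "w1 = w2" using leaf_unique f[OF w(1)] by metis
  qed
  have nn: "non_neighbouring_leaves V E (f ` Par)"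
    unfolding non_neighbouring_leaves_def
  proof (intro conjI ballI impI notI)
    fix l assume "l \<in> f ` Par" thus "is_leaf V E l" using f by auto
  next
    fix l1 l2 assume l: "l1 \<in> f ` Par" "l2 \<in> f ` Par" "l1 \<noteq> l2"
      and ex: "\<exists>w. adj E l1 w \<and> adj E l2 w"
    obtain w1 w2 where w12: "w1 \<in> Par" "w2 \<in> Par" "l1 = f w1" "l2 = f w2" using l by blast
    obtain w where w: "adj E l1 w" "adj E l2 w" using ex by blast
    have a1: "adj E l1 w1" using f[OF w12(1)] w12(3) adj_sym by metis
    have a2: "adj E l2 w2" using f[OF w12(2)] w12(4) adj_sym by metis
    have "w = w1" using leaf_unique[OF _ w(1) a1] f[OF w12(1)] w12(3) by blast
    moreover have "w = w2" using leaf_unique[OF _ w(2) a2] f[OF w12(2)] w12(4) by blast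
    ultimately show False using l(3) w12 by simp
  qed
  have "card (f ` Par) = p" using card_image[OF finj] p_def by simp
  hence pb: "real p < d ^ 6 * real n" using notB nn by force

  define Par' where "Par' = {w\<in>Par. real (card (NL w)) < k}"
  have finPar': "finite Par'" using finPar unfolding Par'_def by simp
  have finNL: "finite (NL w)" for w
  proof -
    have "NL w \<subseteq> V" unfolding NL_def is_leaf_def by blast
    thus ?thesis using finite_subset finV by blast
  qed
  have LHsub: "Lf - H \<subseteq> (\<Union>w\<in>Par'. NL w)"
  proof
    fix l assume l: "l \<in> Lf - H"
    hence leaf: "is_leaf V E l" by (simp add: Lf_def)
    obtain w where w: "adj E l w" using leaf_nbr[OF leaf] by blast
    have lH: "l \<notin> H" using l by blast
    have "\<not> (real (card {u. is_leaf V E u \<and> adj E w u}) \<ge> k)"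
    proof
      assume kk: "k \<le> real (card {u. is_leaf V E u \<and> adj E w u})"
      have "l \<in> heavy_leaves V E k" unfolding heavy_leaves_def
        using leaf w kk by blast
      thus False using lH unfolding H_def by blast
    qed
    hence "real (card (NL w)) < k" unfolding NL_def by simp
    moreover have wl: "adj E w l" using w by (simp add: adj_sym)
    moreover have "w \<in> Par" using leaf wl unfolding Par_def by blast
    moreover have "l \<in> NL w" using leaf wl unfolding NL_def by blast
    ultimately have "w \<in> Par'" "l \<in> NL w" unfolding Par'_def by auto
    thus "l \<in> (\<Union>w\<in>Par'. NL w)" by blast
  qed
  have finU: "finite (\<Union>w\<in>Par'. NL w)" using finPar' finNL by blast
  have "card (Lf - H) \<le> card (\<Union>w\<in>Par'. NL w)"
    by (rule card_mono[OF finU LHsub])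
  also have "\<dots> \<le> (\<Sum>w\<in>Par'. card (NL w))" by (rule card_UN_le[OF finPar'])
  finally have "real (card (Lf - H)) \<le> real (\<Sum>w\<in>Par'. card (NL w))"
    by (rule of_nat_mono)
  also have "\<dots> = (\<Sum>w\<in>Par'. real (card (NL w)))" by (rule of_nat_sum)
  also have "\<dots> \<le> (\<Sum>w\<in>Par'. k)" by (rule sum_mono) (simp add: Par'_def less_imp_le)
  also have "\<dots> = real (card Par') * k" by simp
  also have "\<dots> \<le> real p * k"
  proof -
    have "card Par' \<le> p" unfolding p_def Par'_def using finPar by (simp add: card_mono)
    moreover have "0 \<le> k" unfolding k_def using d0 by simp
    ultimately show ?thesis by (simp add: mult_right_mono)
  qed
  finally have c_lh: "real (card (Lf - H)) \<le> real p * k" .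

  have cover: "V - H \<subseteq> (Lf - H) \<union> G \<union> V3"
  proof
    fix v assume v: "v \<in> V - H"
    have "degree E v \<noteq> 0" using dpos v by blast
    thus "v \<in> (Lf - H) \<union> G \<union> V3" using v unfolding Lf_def G_def V3_def is_leaf_def by auto
  qed
  have finLH: "finite (Lf - H)" using finite_subset[OF _ finV] LfV by blast
  have finG: "finite G" and finV3: "finite V3" using finV unfolding G_def V3_def by auto
  have c_cover: "card (V - H) \<le> card (Lf - H) + card G + card V3"
  proof -
    have "card (V - H) \<le> card ((Lf - H) \<union> G \<union> V3)" using card_mono[OF _ cover] finLH finG finV3 by simp
    also have "\<dots> \<le> card ((Lf - H) \<union> G) + card V3" by (rule card_Un_le)
    also have "\<dots> \<le> card (Lf - H) + card G + card V3" using card_Un_le by simp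
    finally show ?thesis .
  qed

  have mpar: "v \<in> Par" if vV: "v \<in> V" and ml: "m v < degree E v" for v
  proof (rule ccontr)
    assume np: "v \<notin> Par"
    have "{u. adj E v u} \<subseteq> {u. adj E v u \<and> u \<in> V'}"
    proof
      fix u assume "u \<in> {u. adj E v u}"
      hence a: "adj E v u" by simp
      hence "u \<in> V" using adj_in_V[OF gr] by blast
      moreover have "u \<notin> Lf" using np a unfolding Par_def Lf_def by blast
      ultimately show "u \<in> {u. adj E v u \<and> u \<in> V'}" using a unfolding V'_def by blast
    qed
    hence "degree E v \<le> m v" unfolding degree_def m_def using card_mono[OF finm] by blast
    thus False using ml by simp
  qed
  have AP: "A \<subseteq> Par"
  proof
    fix v assume v: "v \<in> A"
    hence vV: "v \<in> V" and vL: "v \<notin> Lf" and mv: "m v \<le> 1" unfolding A_def V'_def by auto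
    have "degree E v \<noteq> 1" using vV vL unfolding Lf_def is_leaf_def by simp
    moreover have "degree E v \<noteq> 0" using dpos vV by blast
    ultimately show "v \<in> Par" using mpar[OF vV] mv by simp
  qed
  have cA: "card A \<le> p" unfolding p_def using card_mono[OF finPar AP] .

  define E' where "E' = {e\<in>E. e \<subseteq> V'}"
  have gr': "graph V' E'" using gr finV' unfolding graph_def E'_def by auto
  have ac': "acyclic_graph E'" using acyclic_mono[OF ac] unfolding E'_def by auto
  have degm: "degree E' v = m v" if "v \<in> V'" for v
  proof -
    have "{u. adj E' v u} = {u. adj E v u \<and> u \<in> V'}" using that unfolding adj_def E'_def by auto
    thus ?thesis unfolding degree_def m_def by simp
  qed
  have "(\<Sum>v\<in>V'. m v) = (\<Sum>v\<in>V'. degree E' v)" using degm by simp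
  also have "\<dots> = 2 * card E'" by (rule handshake[OF gr'])
  also have "\<dots> \<le> 2 * card V'" using edge_le[OF gr' ac'] by simp
  finally have sumV': "(\<Sum>v\<in>V'. m v) \<le> 2 * card V'" .
  hence sumR: "(\<Sum>v\<in>V'. real (m v) - 2) \<le> 0"
  proof -
    have "(\<Sum>v\<in>V'. real (m v)) \<le> 2 * real (card V')" using sumV'
      by (metis of_nat_le_iff of_nat_mult of_nat_numeral of_nat_sum)
    thus ?thesis by (simp add: sum_subtractf)
  qed
  have BgV: "Bg \<subseteq> V'" unfolding Bg_def by auto
  have finBg: "finite Bg" using finite_subset[OF BgV finV'] .
  have AV: "A \<subseteq> V' - Bg" unfolding A_def Bg_def by auto
  have finA: "finite A" using finite_subset[OF _ finV'] AV by blast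
  have s1: "(\<Sum>v\<in>V'. real (m v) - 2) = (\<Sum>v\<in>V' - Bg. real (m v) - 2) + (\<Sum>v\<in>Bg. real (m v) - 2)"
    by (rule sum.subset_diff[OF BgV finV'])
  have s2: "(\<Sum>v\<in>V' - Bg. real (m v) - 2) = (\<Sum>v\<in>(V' - Bg) - A. real (m v) - 2) + (\<Sum>v\<in>A. real (m v) - 2)"
    by (rule sum.subset_diff[OF AV]) (simp add: finV')
  have s3: "(\<Sum>v\<in>(V' - Bg) - A. real (m v) - 2) \<ge> 0"
  proof (rule sum_nonneg)
    fix v assume "v \<in> (V' - Bg) - A"
    hence "m v = 2" unfolding A_def Bg_def by auto
    thus "real (m v) - 2 \<ge> 0" by simp
  qed
  have s4: "(\<Sum>v\<in>A. real (m v) - 2) \<ge> (\<Sum>v\<in>A. -2)" by (rule sum_mono) simp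
  have sBg: "(\<Sum>v\<in>Bg. real (m v) - 2) \<le> 2 * real (card A)"
    using sumR s1 s2 s3 s4 by simp
  have s5: "(\<Sum>v\<in>Bg. real (m v) - 2) \<ge> (\<Sum>v\<in>Bg. real (m v) / 3)"
    by (rule sum_mono) (simp add: Bg_def)
  have s6: "(\<Sum>v\<in>Bg. real (m v) - 2) \<ge> (\<Sum>v\<in>Bg. 1)"
    by (rule sum_mono) (simp add: Bg_def)
  have sumBg: "(\<Sum>v\<in>Bg. real (m v)) \<le> 6 * real (card A)"
  proof -
    have "(\<Sum>v\<in>Bg. real (m v) / 3) = (\<Sum>v\<in>Bg. real (m v)) / 3"
      by (simp add: sum_divide_distrib)
    thus ?thesis using sBg s5 by linarith
  qed
  have cBg: "real (card Bg) \<le> 2 * real (card A)" using sBg s6 by simp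

  have V3sub: "V3 \<subseteq> Bg \<union> Par"
  proof
    fix v assume v: "v \<in> V3"
    hence vV: "v \<in> V" and dv: "3 \<le> degree E v" unfolding V3_def by auto
    have "v \<notin> Lf" using dv unfolding Lf_def is_leaf_def by simp
    hence vV': "v \<in> V'" using vV unfolding V'_def by simp
    show "v \<in> Bg \<union> Par"
    proof (cases "3 \<le> m v")
      case True thus ?thesis using vV' unfolding Bg_def by simp
    next
      case False thus ?thesis using mpar[OF vV] dv by simp
    qed
  qed
  have "card V3 \<le> card Bg + p" unfolding p_def
    using card_mono[OF _ V3sub] finBg finPar card_Un_le[of Bg Par] by simp
  hence c_V3: "real (card V3) \<le> 3 * real p" using cBg cA by linarith

  define Y where "Y u = (\<lambda>g. (g,u)) ` {g. adj E u g \<and> g \<in> V'}" for u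
  define C3 where "C3 = {u\<in>Par. m u \<le> 2}"
  have finC3: "finite C3" using finPar unfolding C3_def by simp
  define X1 where "X1 = (SIGMA g:(Par \<inter> G). {u. adj E g u})"
  have BdSub: "Bd E G \<subseteq> X1 \<union> (\<Union>u\<in>Bg. Y u) \<union> (\<Union>u\<in>C3. Y u)"
  proof
    fix z assume z: "z \<in> Bd E G"
    then obtain g u where gu: "z = (g,u)" "g \<in> G" "u \<notin> G" "adj E g u" unfolding Bd_def by blast
    have gV: "g \<in> V" and uV: "u \<in> V" using adj_in_V[OF gr gu(4)] by auto
    have dg: "degree E g = 2" using gu(2) unfolding G_def by simp
    show "z \<in> X1 \<union> (\<Union>u\<in>Bg. Y u) \<union> (\<Union>u\<in>C3. Y u)"
    proof (cases "u \<in> Lf")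
      case True
      hence "g \<in> Par" using gu(4) unfolding Lf_def Par_def by blast
      thus ?thesis using gu unfolding X1_def by blast
    next
      case False
      hence uV': "u \<in> V'" using uV unfolding V'_def by simp
      have "g \<notin> Lf" using dg unfolding Lf_def is_leaf_def by simp
      hence gV': "g \<in> V'" using gV unfolding V'_def by simp
      have ug: "adj E u g" using gu(4) adj_sym by metis
      have zY: "z \<in> Y u" unfolding Y_def using gu(1) ug gV' by blast
      have "degree E u \<noteq> 0" using dpos uV by blast
      moreover have "degree E u \<noteq> 1" using False uV unfolding Lf_def is_leaf_def by simp
      moreover have "degree E u \<noteq> 2" using gu(3) uV unfolding G_def by simp
      ultimately have du: "3 \<le> degree E u" by linarith
      show ?thesis
      proof (cases "3 \<le> m u")
        case True
        hence "u \<in> Bg" using uV' unfolding Bg_def by simp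
        thus ?thesis using zY by blast
      next
        case False
        hence "u \<in> C3" using mpar[OF uV] du unfolding C3_def by simp
        thus ?thesis using zY by blast
      qed
    qed
  qed
  have cY: "card (Y u) \<le> m u" for u
    unfolding Y_def m_def using card_image_le[OF finm[of u]] by simp
  have finY: "finite (Y u)" for u unfolding Y_def using finm[of u] by simp
  have finX1: "finite X1" unfolding X1_def using finPar nbrs_finite[OF gr] by simp
  have cX1: "card X1 \<le> 2 * p"
  proof -
    have "card X1 = (\<Sum>g\<in>Par \<inter> G. card {u. adj E g u})"
      unfolding X1_def using finPar nbrs_finite[OF gr] by simp
    also have "\<dots> = (\<Sum>g\<in>Par \<inter> G. 2)" by (rule sum.cong) (auto simp: G_def degree_def)
    also have "\<dots> = 2 * card (Par \<inter> G)" by simp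
    also have "\<dots> \<le> 2 * p" unfolding p_def using card_mono[OF finPar, of "Par \<inter> G"] by simp
    finally show ?thesis .
  qed
  have cU2: "real (card (\<Union>u\<in>Bg. Y u)) \<le> 6 * real p"
  proof -
    have "card (\<Union>u\<in>Bg. Y u) \<le> (\<Sum>u\<in>Bg. card (Y u))" by (rule card_UN_le[OF finBg])
    also have "\<dots> \<le> (\<Sum>u\<in>Bg. m u)" by (rule sum_mono) (rule cY)
    finally have "real (card (\<Union>u\<in>Bg. Y u)) \<le> real (\<Sum>u\<in>Bg. m u)"
      by (rule of_nat_mono)
    also have "\<dots> = (\<Sum>u\<in>Bg. real (m u))" by (rule of_nat_sum)
    finally have h2: "real (card (\<Union>u\<in>Bg. Y u)) \<le> (\<Sum>u\<in>Bg. real (m u))" .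
    have "real (card A) \<le> real p" using cA by simp
    thus ?thesis using sumBg h2 by linarith
  qed
  have cU3: "card (\<Union>u\<in>C3. Y u) \<le> 2 * p"
  proof -
    have "card (\<Union>u\<in>C3. Y u) \<le> (\<Sum>u\<in>C3. card (Y u))" by (rule card_UN_le[OF finC3])
    also have "\<dots> \<le> (\<Sum>u\<in>C3. 2)" 
    proof (rule sum_mono)
      fix u assume "u \<in> C3"
      hence "m u \<le> 2" unfolding C3_def by simp
      thus "card (Y u) \<le> 2" using cY[of u] by linarith
    qed
    also have "\<dots> = 2 * card C3" by simp
    also have "\<dots> \<le> 2 * p" unfolding p_def C3_def using card_mono[OF finPar] by simp
    finally show ?thesis .
  qed
  have finU2: "finite (\<Union>u\<in>Bg. Y u)" using finBg finY by simp
  have finU3: "finite (\<Union>u\<in>C3. Y u)" using finC3 finY by simp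
  have "card (Bd E G) \<le> card (X1 \<union> (\<Union>u\<in>Bg. Y u) \<union> (\<Union>u\<in>C3. Y u))"
    using card_mono[OF _ BdSub] finX1 finU2 finU3 by simp
  also have "\<dots> \<le> card X1 + card (\<Union>u\<in>Bg. Y u) + card (\<Union>u\<in>C3. Y u)"
    by (meson add_le_mono card_Un_le le_trans order_refl)
  finally have "real (card (Bd E G)) \<le> real (card X1) + real (card (\<Union>u\<in>Bg. Y u)) + real (card (\<Union>u\<in>C3. Y u))"
    by linarith
  hence c_Bd: "real (card (Bd E G)) \<le> 10 * real p" using cX1 cU2 cU3 by linarith

  define M where "M = nat \<lceil>1/d\<rceil> + 1"
  have M1: "1 \<le> M" unfolding M_def by simp
  have GV: "G \<subseteq> V" unfolding G_def by auto
  have Gd: "\<forall>g\<in>G. degree E g = 2" unfolding G_def by auto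
  obtain P where P: "\<forall>p\<in>set P. is_path E p \<and> length p = M \<and> set p \<subseteq> G"
    "\<forall>i j. i < length P \<and> j < length P \<and> i \<noteq> j \<longrightarrow> set (P ! i) \<inter> set (P ! j) = {}"
    "card G \<le> length P * M + M * card (Bd E G)"
    using paths_lemma[OF gr ac M1 GV Gd] by blast
  have bare: "\<forall>q\<in>set P. bare_path E q \<and> real (path_length q) \<ge> 1 / d"
  proof
    fix q assume q: "q \<in> set P"
    have qq: "is_path E q" "length q = M" "set q \<subseteq> G" using P(1) q by auto
    have "degree E (q ! i) = 2" if "i < length q" for i using qq(3) that nth_mem Gd by blast
    hence "bare_path E q" using qq(1) unfolding bare_path_def by auto
    moreover have "real (path_length q) \<ge> 1 / d"
    proof -
      have "path_length q = nat \<lceil>1/d\<rceil>" using qq(2) unfolding path_length_def M_def by simp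
      thus ?thesis using real_nat_ceiling_ge by simp
    qed
    ultimately show "bare_path E q \<and> real (path_length q) \<ge> 1 / d" by blast
  qed
  have Mr: "real M \<le> 1/d + 2"
  proof -
    have "1/d > 0" using d0 by simp
    hence "real (nat \<lceil>1/d\<rceil>) = real_of_int \<lceil>1/d\<rceil>" by simp
    also have "\<dots> < 1/d + 1" by linarith
    finally show ?thesis unfolding M_def by simp
  qed
  have gP: "real (card G) \<le> real (length P) * real M + real M * real (card (Bd E G))"
    using P(3) by (metis of_nat_add of_nat_le_iff of_nat_mult)
  have "real (length P) \<ge> d * real n / 800"
  proof (rule final_arith[OF d0 d1 pb _ c_V3 c_Bd _ _ gP Mr])
    show "real (card (Lf - H)) \<le> real p * (1 / d ^ 4)" using c_lh unfolding k_def by simp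
    show "real (card (V - H)) \<le> real (card (Lf - H)) + real (card G) + real (card V3)"
      using c_cover by linarith
    show "real n / 100 < real (card (V - H))" using notC unfolding H_def k_def by simp
  qed (use n2 in auto)
  thus ?thesis using bare P(2) by blast
qed




theorem lemma3p5:
  shows "\<exists>C::real. C > 0 \<and>
    (\<forall>(\<delta>::real) (n::nat). 0 < \<delta> \<and> \<delta> \<le> 1 / C \<and> 0 < n \<and> 1 / real n \<le> \<delta> powr C / C \<longrightarrow>
      (\<forall>V E. is_tree V E \<and> card V = n \<longrightarrow>
         (\<exists>P::nat list list. real (length P) \<ge> \<delta> * real n / 800 \<and>
             (\<forall>p\<in>set P. bare_path E p \<and> real (path_length p) \<ge> 1 / \<delta>) \<and>
             (\<forall>i j. i < length P \<and> j < length P \<and> i \<noteq> j \<longrightarrow> set (P ! i) \<inter> set (P ! j) = {}))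
       \<or> (\<exists>L. non_neighbouring_leaves V E L \<and> real (card L) \<ge> \<delta> ^ 6 * real n)
       \<or> real (card (V - heavy_leaves V E (1 / \<delta> ^ 4))) \<le> real n / 100))"
proof (rule exI[of _ 100], intro conjI allI impI)
  show "(0::real) < 100" by simp
  fix d :: real and n :: nat and V E
  assume A: "0 < d \<and> d \<le> 1 / 100 \<and> 0 < n \<and> 1 / real n \<le> d powr 100 / 100"
    and T: "is_tree V E \<and> card V = n"
  have d0: "0 < d" and d1: "d \<le> 1/100" using A by auto
  have "d powr 100 = d ^ 100" using d0 by (simp add: powr_realpow)
  also have "\<dots> \<le> 1" using d0 d1 by (intro power_le_one) auto
  finally have p1: "d powr 100 \<le> 1" .
  have "d powr 100 / 100 \<le> 1 / 100" using p1 by simp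
  hence h1: "1 / real n \<le> 1 / 100" using A by linarith
  have np: "0 < real n" using A by simp
  hence "100 \<le> real n" using h1 by (simp add: field_simps)
  hence n2: "2 \<le> n" by simp
  show "(\<exists>P::nat list list. real (length P) \<ge> d * real n / 800 \<and>
             (\<forall>p\<in>set P. bare_path E p \<and> real (path_length p) \<ge> 1 / d) \<and>
             (\<forall>i j. i < length P \<and> j < length P \<and> i \<noteq> j \<longrightarrow> set (P ! i) \<inter> set (P ! j) = {}))
       \<or> (\<exists>L. non_neighbouring_leaves V E L \<and> real (card L) \<ge> d ^ 6 * real n)
       \<or> real (card (V - heavy_leaves V E (1 / d ^ 4))) \<le> real n / 100"
    using core[of V E n d] T n2 d0 d1 by blast
qed


end
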